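(* Let $E/\mathbb{Q}$ be an elliptic curve with nonzero $j$-invariant and a rational point $P$ of order $3$. If $\widetilde E=E/\langle P\rangle$ has a rational point of order $3$, then there are relatively prime integers $a,b$, both perfect cubes, with $a>0$, such that $E$ and $\widetilde E$ are $\mathbb{Q}$-isomorphic to $E_{C_3}(a,b)$ and $\widetilde E_{C_3}(a,b)$, respectively.
   Context: For integers $a,b$, $E_{C_3}(a,b)$ is the curve $y^2+axy+a^2by=x^3$ over $\mathbb{Q}$ (with the point $(0,0)$ of order $3$), and $\widetilde E_{C_3}(a,b)$ is the curve $y^2+axy+a^2by=x^3-5a^3b\,x-a^4b(a+7b)$, which is a model of $E_{C_3}(a,b)/\langle(0,0)\rangle$. Known fact usable here: every elliptic curve $E/\mathbb{Q}$ with nonzero $j$-invariant and a rational point $P$ of order $3$ is $\mathbb{Q}$-isomorphic to $E_{C_3}(a,b)$ for some relatively prime integers $a>0$, $b$, with $E/\langle P\rangle\cong \widetilde E_{C_3}(a,b)$. *)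

theory Defs
  imports Complex_Main
begin

text \<open>Long Weierstrass equations over the rationals:
  W a1 a2 a3 a4 a6 is  y^2 + a1 x y + a3 y = x^3 + a2 x^2 + a4 x + a6.\<close>

datatype wcurve = W rat rat rat rat rat

fun wa1 :: "wcurve \<Rightarrow> rat" where "wa1 (W a1 a2 a3 a4 a6) = a1"
fun wa2 :: "wcurve \<Rightarrow> rat" where "wa2 (W a1 a2 a3 a4 a6) = a2"
fun wa3 :: "wcurve \<Rightarrow> rat" where "wa3 (W a1 a2 a3 a4 a6) = a3"
fun wa4 :: "wcurve \<Rightarrow> rat" where "wa4 (W a1 a2 a3 a4 a6) = a4"
fun wa6 :: "wcurve \<Rightarrow> rat" where "wa6 (W a1 a2 a3 a4 a6) = a6"

definition wb2 :: "wcurve \<Rightarrow> rat" where "wb2 E = wa1 E ^ 2 + 4 * wa2 E"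
definition wb4 :: "wcurve \<Rightarrow> rat" where "wb4 E = 2 * wa4 E + wa1 E * wa3 E"
definition wb6 :: "wcurve \<Rightarrow> rat" where "wb6 E = wa3 E ^ 2 + 4 * wa6 E"
definition wb8 :: "wcurve \<Rightarrow> rat" where
  "wb8 E = wa1 E ^ 2 * wa6 E + 4 * wa2 E * wa6 E - wa1 E * wa3 E * wa4 E
           + wa2 E * wa3 E ^ 2 - wa4 E ^ 2"
definition wc4 :: "wcurve \<Rightarrow> rat" where "wc4 E = wb2 E ^ 2 - 24 * wb4 E"
definition disc :: "wcurve \<Rightarrow> rat" where
  "disc E = - (wb2 E ^ 2) * wb8 E - 8 * wb4 E ^ 3 - 27 * wb6 E ^ 2
            + 9 * wb2 E * wb4 E * wb6 E"
definition j_inv :: "wcurve \<Rightarrow> rat" where "j_inv E = wc4 E ^ 3 / disc E"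

definition elliptic :: "wcurve \<Rightarrow> bool" where "elliptic E \<longleftrightarrow> disc E \<noteq> 0"

datatype pt = Inf | Aff rat rat

fun on_curve :: "wcurve \<Rightarrow> pt \<Rightarrow> bool" where
  "on_curve E Inf = True"
| "on_curve E (Aff x y) \<longleftrightarrow>
     y ^ 2 + wa1 E * x * y + wa3 E * y = x ^ 3 + wa2 E * x ^ 2 + wa4 E * x + wa6 E"

text \<open>Chord-and-tangent group law (Silverman, Algorithm III.2.3).\<close>
fun pt_neg :: "wcurve \<Rightarrow> pt \<Rightarrow> pt" where
  "pt_neg E Inf = Inf"
| "pt_neg E (Aff x y) = Aff x (- y - wa1 E * x - wa3 E)"

fun pt_add :: "wcurve \<Rightarrow> pt \<Rightarrow> pt \<Rightarrow> pt" where
  "pt_add E Inf Q = Q"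
| "pt_add E P Inf = P"
| "pt_add E (Aff x1 y1) (Aff x2 y2) =
     (if x1 = x2 \<and> y1 + y2 + wa1 E * x2 + wa3 E = 0 then Inf
      else
        let lam = (if x1 \<noteq> x2 then (y2 - y1) / (x2 - x1)
                   else (3 * x1 ^ 2 + 2 * wa2 E * x1 + wa4 E - wa1 E * y1)
                        / (2 * y1 + wa1 E * x1 + wa3 E));
            nu = (if x1 \<noteq> x2 then (y1 * x2 - y2 * x1) / (x2 - x1)
                  else (- (x1 ^ 3) + wa4 E * x1 + 2 * wa6 E - wa3 E * y1)
                       / (2 * y1 + wa1 E * x1 + wa3 E));
            x3 = lam ^ 2 + wa1 E * lam - wa2 E - x1 - x2;
            y3 = - (lam + wa1 E) * x3 - nu - wa3 E
        in Aff x3 y3)"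

text \<open>P is a rational point of order exactly 3 (3 is prime, so P \<noteq> O and 3P = O).\<close>
definition order3 :: "wcurve \<Rightarrow> pt \<Rightarrow> bool" where
  "order3 E P \<longleftrightarrow> on_curve E P \<and> P \<noteq> Inf \<and> pt_add E P (pt_add E P P) = Inf"

text \<open>Q-isomorphism: related by an admissible change of variables
  x = u^2 x' + r, y = u^3 y' + s u^2 x' + t with u \<noteq> 0 (Silverman Table III.3.1).\<close>
definition iso_Q :: "wcurve \<Rightarrow> wcurve \<Rightarrow> bool" where
  "iso_Q E E' \<longleftrightarrow> (\<exists>u r s t :: rat. u \<noteq> 0 \<and>
      u * wa1 E' = wa1 E + 2 * s \<and>
      u ^ 2 * wa2 E' = wa2 E - s * wa1 E + 3 * r - s ^ 2 \<and>
      u ^ 3 * wa3 E' = wa3 E + r * wa1 E + 2 * t \<and>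
      u ^ 4 * wa4 E' = wa4 E - s * wa3 E + 2 * r * wa2 E - (t + r * s) * wa1 E
                        + 3 * r ^ 2 - 2 * s * t \<and>
      u ^ 6 * wa6 E' = wa6 E + r * wa4 E + r ^ 2 * wa2 E + r ^ 3 - t * wa3 E
                        - t ^ 2 - r * t * wa1 E)"

text \<open>Velu's model of the quotient E/<P> for a point P of order 3
  (subgroup {O, P, -P}, one representative of {P,-P}).\<close>
fun velu3 :: "wcurve \<Rightarrow> pt \<Rightarrow> wcurve" where
  "velu3 E Inf = E"
| "velu3 E (Aff xQ yQ) =
     (let gx = 3 * xQ ^ 2 + 2 * wa2 E * xQ + wa4 E - wa1 E * yQ;
          gy = - 2 * yQ - wa1 E * xQ - wa3 E;
          v = 2 * gx - wa1 E * gy;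
          w = gy ^ 2 + xQ * v
      in W (wa1 E) (wa2 E) (wa3 E) (wa4 E - 5 * v)
           (wa6 E - (wa1 E ^ 2 + 4 * wa2 E) * v - 7 * w))"

definition E_C3 :: "int \<Rightarrow> int \<Rightarrow> wcurve" where
  "E_C3 a b = W (of_int a) 0 (of_int (a ^ 2 * b)) 0 0"

definition Et_C3 :: "int \<Rightarrow> int \<Rightarrow> wcurve" where
  "Et_C3 a b = W (of_int a) 0 (of_int (a ^ 2 * b)) (of_int (- 5 * a ^ 3 * b))
                 (of_int (- (a ^ 4 * b * (a + 7 * b))))"

end

theory Submission
  imports Defs
begin

definition flex :: "wcurve \<Rightarrow> rat \<Rightarrow> rat \<Rightarrow> rat \<Rightarrow> bool" where
  "flex E x y l \<longleftrightarrow> wa2 E - l * wa1 E + 3 * x - l^2 = 0 \<and>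
     wa4 E - l * wa3 E + 2 * x * wa2 E - (y + x * l) * wa1 E + 3 * x^2 - 2 * l * y = 0 \<and>
     y ^ 2 + wa1 E * x * y + wa3 E * y = x ^ 3 + wa2 E * x ^ 2 + wa4 E * x + wa6 E"

lemma flex_transport:
  fixes a1 a2 a3 a4 a6 b1 b2 b3 b4 b6 u r s t x' y' l' :: rat
  assumes u: "u \<noteq> 0"
    and h1: "u * b1 = a1 + 2 * s"
    and h2: "u ^ 2 * b2 = a2 - s * a1 + 3 * r - s ^ 2"
    and h3: "u ^ 3 * b3 = a3 + r * a1 + 2 * t"
    and h4: "u ^ 4 * b4 = a4 - s * a3 + 2 * r * a2 - (t + r * s) * a1 + 3 * r ^ 2 - 2 * s * t"
    and h6: "u ^ 6 * b6 = a6 + r * a4 + r ^ 2 * a2 + r ^ 3 - t * a3 - t ^ 2 - r * t * a1"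
    and f: "flex (W a1 a2 a3 a4 a6) (r + u^2 * x') (t + u^3 * y' + s * u^2 * x') (s + u * l')"
  shows "flex (W b1 b2 b3 b4 b6) x' y' l'"
proof -
  from f have e1: "a2 - (s + u * l') * a1 + 3 * (r + u^2 * x') - (s + u * l')^2 = 0"
    and e2: "a4 - (s + u * l') * a3 + 2 * (r + u^2 * x') * a2 - ((t + u^3 * y' + s * u^2 * x') + (r + u^2 * x') * (s + u * l')) * a1 + 3 * (r + u^2 * x')^2 - 2 * (s + u * l') * (t + u^3 * y' + s * u^2 * x') = 0"
    and e3: "(t + u^3 * y' + s * u^2 * x') ^ 2 + a1 * (r + u^2 * x') * (t + u^3 * y' + s * u^2 * x') + a3 * (t + u^3 * y' + s * u^2 * x') = (r + u^2 * x') ^ 3 + a2 * (r + u^2 * x') ^ 2 + a4 * (r + u^2 * x') + a6"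
    by (auto simp: flex_def)
  have g1: "u^2 * (b2 - l' * b1 + 3 * x' - l'^2) = 0"
    using h1 h2 e1 by algebra
  have g2: "u^4 * (b4 - l' * b3 + 2 * x' * b2 - (y' + x' * l') * b1 + 3 * x'^2 - 2 * l' * y') = 0"
    using h1 h2 h3 h4 e2 by algebra
  have g3: "u^6 * (y' ^ 2 + b1 * x' * y' + b3 * y' - (x' ^ 3 + b2 * x' ^ 2 + b4 * x' + b6)) = 0"
    using h1 h2 h3 h4 h6 e3 by algebra
  show ?thesis using g1 g2 g3 u by (simp add: flex_def)
qed

lemma order3_flex:
  assumes "order3 (W a1 a2 a3 a4 a6) P"
  obtains x y l where "P = Aff x y" "a3 + x * a1 + 2 * y \<noteq> 0"
    "flex (W a1 a2 a3 a4 a6) x y l"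
proof -
  let ?E = "W a1 a2 a3 a4 a6"
  from assms obtain x y where P: "P = Aff x y" and oc: "on_curve ?E (Aff x y)"
    and o: "pt_add ?E (Aff x y) (pt_add ?E (Aff x y) (Aff x y)) = Inf"
    unfolding order3_def by (cases P) auto
  define D where "D = 2 * y + a1 * x + a3"
  have D: "D \<noteq> 0"
  proof
    assume "D = 0"
    then have "pt_add ?E (Aff x y) (Aff x y) = Inf" by (simp add: D_def)
    with o show False by simp
  qed
  define l where "l = (3 * x ^ 2 + 2 * a2 * x + a4 - a1 * y) / D"
  define x3 where "x3 = l ^ 2 + a1 * l - a2 - x - x"
  obtain y3 where dbl: "pt_add ?E (Aff x y) (Aff x y) = Aff x3 y3"
    using D by (simp add: D_def l_def x3_def Let_def)
  have "x3 = x"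
  proof (rule ccontr)
    assume "x3 \<noteq> x"
    then have "pt_add ?E (Aff x y) (Aff x3 y3) \<noteq> Inf" by (simp add: Let_def)
    with o dbl show False by simp
  qed
  then have e1: "a2 - l * a1 + 3 * x - l^2 = 0" by (simp add: x3_def algebra_simps)
  have ld: "l * D = 3 * x ^ 2 + 2 * a2 * x + a4 - a1 * y" using D by (simp add: l_def)
  have e2: "a4 - l * a3 + 2 * x * a2 - (y + x * l) * a1 + 3 * x^2 - 2 * l * y = 0"
    using ld by (simp add: D_def algebra_simps)
  show ?thesis
    apply (rule that[OF P, of l])
    using D apply (simp add: D_def algebra_simps)
    using e1 e2 oc by (simp add: flex_def)
qed

lemma et_cube:
  fixes m n :: int and x y l :: rat
  assumes m: "m > 0" and f: "flex (Et_C3 m n) x y l"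
  shows "\<exists>r::rat. of_int n = of_int m * r^3"
proof -
  define M where "M = (of_int m :: rat)"
  define N where "N = (of_int n :: rat)"
  have M: "M > 0" using m by (simp add: M_def)
  from f have e1: "- l * M + 3 * x - l^2 = 0"
    and e2: "-5 * M^3 * N - l * (M^2 * N) - (y + x * l) * M + 3 * x^2 - 2 * l * y = 0"
    and e3: "y^2 + M * x * y + M^2 * N * y = x^3 + (-5 * M^3 * N) * x + (- (M^4 * N * (M + 7 * N)))"
    by (simp_all add: flex_def Et_C3_def M_def N_def algebra_simps)
  define q where "q = l^2 + l * M + M^2"
  have qpos: "q > 0"
  proof -
    have "q = (l + M/2)^2 + 3 * M^2 / 4" by (simp add: q_def power2_eq_square field_simps)
    moreover have "M^2 > 0" using M by simp
    moreover have "(l + M/2)^2 \<ge> 0" by simp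
    ultimately show ?thesis by linarith
  qed
  define F where "F = x^3 - 9*M^3*N*x - 27*M^4*N^2 - M^5*N"
  have "q * F = 0" unfolding q_def F_def using e1 e2 e3 by algebra
  then have F0: "F = 0" using qpos by simp
  have q3: "q = 3 * x + M^2" using e1 by (simp add: q_def algebra_simps)
  have "N * q^3 - M * (9*M*N + x)^3 = F * (27 * N - M)"
    unfolding q3 F_def by algebra
  then have "N * q^3 = M * (9*M*N + x)^3" using F0 by simp
  then have "N = M * ((9*M*N + x) / q)^3" using qpos
    by (simp add: power_divide field_simps)
  then show ?thesis unfolding M_def N_def by blast
qed

lemma int_cubes:
  fixes m n :: int and r :: rat
  assumes m: "m > 0" and cop: "coprime m n" and h: "of_int n = of_int m * r^3"
  shows "(\<exists>c. m = c^3) \<and> (\<exists>d. n = d^3)"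
proof -
  obtain p s where qs: "quotient_of r = (p, s)" by (cases "quotient_of r")
  have s: "s > 0" using quotient_of_denom_pos[OF qs] .
  have ps: "coprime p s" using quotient_of_coprime[OF qs] .
  have r: "r = of_int p / of_int s" using quotient_of_div[OF qs] .
  have "(of_int n :: rat) * of_int s^3 = of_int m * of_int p^3"
    using h s by (simp add: r power_divide field_simps)
  then have eq: "n * s^3 = m * p^3"
    by (metis of_int_eq_iff of_int_mult of_int_power)
  have "s^3 dvd m * p^3" by (metis eq dvd_triv_right)
  moreover have "coprime (s^3) (p^3)" using ps by (simp add: coprime_commute)
  ultimately have d1: "s^3 dvd m" using coprime_dvd_mult_left_iff by blast
  have "m dvd n * s^3" by (metis eq dvd_triv_left)
  then have d2: "m dvd s^3" using cop coprime_dvd_mult_right_iff by blast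
  have ms: "m = s^3" using d1 d2 m s by (simp add: zdvd_antisym_nonneg)
  then have "n = p^3" using eq s by simp
  with ms show ?thesis by blast
qed

theorem proposition4p4:
  fixes E :: wcurve and P :: pt
  assumes "elliptic E"
    and "j_inv E \<noteq> 0"
    and "order3 E P"
    and "\<exists>Q. order3 (velu3 E P) Q"
  shows "\<exists>a b :: int. coprime a b \<and> a > 0 \<and>
           (\<exists>c :: int. a = c ^ 3) \<and> (\<exists>d :: int. b = d ^ 3) \<and>
           iso_Q E (E_C3 a b) \<and> iso_Q (velu3 E P) (Et_C3 a b)"
proof -
  obtain a1 a2 a3 a4 a6 where E: "E = W a1 a2 a3 a4 a6" by (cases E)
  obtain x y l where P: "P = Aff x y" and D: "a3 + x * a1 + 2 * y \<noteq> 0"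
    and fl: "flex (W a1 a2 a3 a4 a6) x y l"
    using order3_flex assms(3) unfolding E by blast
  from fl have e1: "a2 - l * a1 + 3 * x - l^2 = 0"
    and e2: "a4 - l * a3 + 2 * x * a2 - (y + x * l) * a1 + 3 * x^2 - 2 * l * y = 0"
    and e3: "y ^ 2 + a1 * x * y + a3 * y = x ^ 3 + a2 * x ^ 2 + a4 * x + a6"
    by (simp_all add: flex_def)
  define A1 where "A1 = a1 + 2 * l"
  define A3 where "A3 = a3 + x * a1 + 2 * y"
  have c4: "wc4 E = A1 * (A1^3 - 24 * A3)"
    unfolding E wc4_def wb2_def wb4_def A1_def A3_def using e1 e2 by simp algebra
  have A1: "A1 \<noteq> 0"
  proof
    assume "A1 = 0"
    then have "wc4 E = 0" using c4 by simp
    then show False using assms(2) by (simp add: j_inv_def)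
  qed
  obtain n m where qo: "quotient_of (A3 / A1^3) = (n, m)" by (cases "quotient_of (A3 / A1^3)")
  have m: "m > 0" using quotient_of_denom_pos[OF qo] .
  have cop: "coprime m n" using quotient_of_coprime[OF qo] by (simp add: coprime_commute)
  have qd: "A3 / A1^3 = of_int n / of_int m" using quotient_of_div[OF qo] .
  define u where "u = A1 / of_int m"
  have u: "u \<noteq> 0" using A1 m by (simp add: u_def)
  have hA1: "A1 = u * of_int m" using m by (simp add: u_def)
  have hA3: "A3 = u^3 * (of_int m)^2 * of_int n"
  proof -
    have "A3 = A1^3 * (of_int n / of_int m)" using qd A1 by (simp add: field_simps)
    then show ?thesis using m by (simp add: u_def power_divide field_simps power3_eq_cube power2_eq_square)
  qed
  have iso1: "iso_Q E (E_C3 m n)"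
    unfolding iso_Q_def E E_C3_def
    apply (rule exI[of _ u], rule exI[of _ x], rule exI[of _ l], rule exI[of _ y])
    using u hA1 hA3 e1 e2 e3 unfolding A1_def A3_def
    by (simp add: algebra_simps power2_eq_square power3_eq_cube)
  define M where "M = (of_int m :: rat)"
  define N where "N = (of_int n :: rat)"
  have k1: "a1 + 2 * l = u * M" using hA1 by (simp add: A1_def M_def)
  have k3: "a3 + x * a1 + 2 * y = u^3 * M^2 * N" using hA3 by (simp add: A3_def M_def N_def)
  have V: "velu3 E P = W a1 a2 a3
      (a4 - 5 * (2 * (3 * x ^ 2 + 2 * a2 * x + a4 - a1 * y) - a1 * (- 2 * y - a1 * x - a3)))
      (a6 - (a1 ^ 2 + 4 * a2) * (2 * (3 * x ^ 2 + 2 * a2 * x + a4 - a1 * y) - a1 * (- 2 * y - a1 * x - a3))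
        - 7 * ((- 2 * y - a1 * x - a3) ^ 2 + x * (2 * (3 * x ^ 2 + 2 * a2 * x + a4 - a1 * y) - a1 * (- 2 * y - a1 * x - a3))))"
    unfolding E P by (simp add: Let_def)
    have g4: "u ^ 4 * (-5 * M^3 * N) = (a4 - 5 * (2 * (3 * x ^ 2 + 2 * a2 * x + a4 - a1 * y) - a1 * (- 2 * y - a1 * x - a3))) - l * a3 + 2 * x * a2 - (y + x * l) * a1 + 3 * x ^ 2 - 2 * l * y"
      using k1 k3 e1 e2 by algebra
    have g6: "u ^ 6 * (- (M^4 * N * (M + 7 * N))) = (a6 - (a1 ^ 2 + 4 * a2) * (2 * (3 * x ^ 2 + 2 * a2 * x + a4 - a1 * y) - a1 * (- 2 * y - a1 * x - a3))
        - 7 * ((- 2 * y - a1 * x - a3) ^ 2 + x * (2 * (3 * x ^ 2 + 2 * a2 * x + a4 - a1 * y) - a1 * (- 2 * y - a1 * x - a3))))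
        + x * (a4 - 5 * (2 * (3 * x ^ 2 + 2 * a2 * x + a4 - a1 * y) - a1 * (- 2 * y - a1 * x - a3))) + x ^ 2 * a2 + x ^ 3 - y * a3 - y ^ 2 - x * y * a1"
      using k1 k3 e1 e2 e3 by algebra
  have iso2: "iso_Q (velu3 E P) (Et_C3 m n)"
      unfolding iso_Q_def V Et_C3_def
      apply (rule exI[of _ u], rule exI[of _ x], rule exI[of _ l], rule exI[of _ y])
      using u k1 k3 e1 g4 g6 unfolding M_def N_def
      by (simp add: algebra_simps power2_eq_square power3_eq_cube)
  have Et: "Et_C3 m n = W M 0 (M^2 * N) (-5 * M^3 * N) (- (M^4 * N * (M + 7 * N)))"
    by (simp add: Et_C3_def M_def N_def)
  obtain Q where oQ: "order3 (velu3 E P) Q" using assms(4) by blast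
  obtain xq yq lq where flQ: "flex (velu3 E P) xq yq lq"
    using order3_flex oQ unfolding V by metis
  have h2: "u^2 * 0 = a2 - l * a1 + 3 * x - l^2" using e1 by simp
  have k3': "u^3 * (M^2 * N) = a3 + x * a1 + 2 * y" using k3 by (simp add: mult.assoc)
  have fl2: "flex (velu3 E P) (x + u^2 * ((xq - x)/u^2)) (y + u^3 * ((yq - y - l * (xq - x))/u^3) + l * u^2 * ((xq - x)/u^2)) (l + u * ((lq - l)/u))"
    using flQ u by simp
  have "flex (Et_C3 m n) ((xq - x)/u^2) ((yq - y - l * (xq - x))/u^3) ((lq - l)/u)"
    unfolding Et
    apply (rule flex_transport[OF u k1[symmetric] h2 k3' g4 g6])
    using fl2 unfolding V .
  from et_cube[OF m this] obtain r where "(of_int n :: rat) = of_int m * r^3" by blast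
  then have cubes: "(\<exists>c. m = c^3) \<and> (\<exists>d. n = d^3)" using int_cubes m cop by blast
  show ?thesis using cop m cubes iso1 iso2 by blast
qed

end
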